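(* Let $M$ be a closed Riemannian manifold with fundamental group $\Gamma$ and universal cover $\widetilde{M}$, let $\Gamma$ act freely and continuously on a Cantor set $X$, and let $\Gamma$ act diagonally on $X\times\widetilde{M}$ (via deck transformations on $\widetilde{M}$). Let $\Gamma(A_1 \times S_1), \ldots, \Gamma(A_r \times S_r)$ be finitely many thick orbits in $X \times \widetilde{M}$. Then for any ball $B(\widetilde{p}, R)$ in $\widetilde{M}$, there exists a partition of $X$ into finitely many clopen sets $X_1, \ldots, X_k$ such that for any $i \in \{1, \ldots, k\}$, any $x, y \in X_i$, any $\widetilde{q} \in B(\widetilde{p}, R)$, and any $j \in \{1, \ldots, r\}$, we have $(x, \widetilde{q}) \in \Gamma(A_j \times S_j)$ if and only if $(y, \widetilde{q}) \in \Gamma(A_j \times S_j)$.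
   Context: A thick set is a subset of $X\times\widetilde{M}$ of the form $A\times S$ with $A\subseteq X$ clopen and $S\subseteq\widetilde{M}$ bounded. A thick set has a non-self-intersecting orbit if it is disjoint from each of its translates $\gamma(A\times S)$, $\gamma\neq 1$; in that case the union $\Gamma(A\times S)$ of it and all its translates is called a thick orbit. *)

theory Defs
  imports "HOL-Analysis.Analysis" "HOL-Algebra.Group_Action"
begin

definition cantor_set :: "'x topology \<Rightarrow> bool" where
  "cantor_set X \<longleftrightarrow>
     X homeomorphic_space product_topology (\<lambda>_::nat. discrete_topology (UNIV::bool set)) UNIV"

definition diag_act :: "('g \<Rightarrow> 'x \<Rightarrow> 'x) \<Rightarrow> ('g \<Rightarrow> 'm \<Rightarrow> 'm) \<Rightarrow> 'g \<Rightarrow> 'x \<times> 'm \<Rightarrow> 'x \<times> 'm" where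
  "diag_act \<phi> \<psi> g = (\<lambda>(x, m). (\<phi> g x, \<psi> g m))"

definition thick_set :: "'x topology \<Rightarrow> 'x set \<Rightarrow> ('m::metric_space) set \<Rightarrow> bool" where
  "thick_set X A S \<longleftrightarrow> A \<subseteq> topspace X \<and> closedin X A \<and> openin X A \<and> bounded S"

definition non_self_intersecting ::
  "('g, 'b) monoid_scheme \<Rightarrow> ('g \<Rightarrow> 'x \<Rightarrow> 'x) \<Rightarrow> ('g \<Rightarrow> 'm \<Rightarrow> 'm) \<Rightarrow> 'x set \<Rightarrow> 'm set \<Rightarrow> bool" where
  "non_self_intersecting G \<phi> \<psi> A S \<longleftrightarrow>
     (\<forall>g\<in>carrier G. g \<noteq> \<one>\<^bsub>G\<^esub> \<longrightarrow> diag_act \<phi> \<psi> g ` (A \<times> S) \<inter> (A \<times> S) = {})"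

definition thick_orbit ::
  "('g, 'b) monoid_scheme \<Rightarrow> ('g \<Rightarrow> 'x \<Rightarrow> 'x) \<Rightarrow> ('g \<Rightarrow> 'm \<Rightarrow> 'm) \<Rightarrow> 'x set \<Rightarrow> 'm set \<Rightarrow> ('x \<times> 'm) set" where
  "thick_orbit G \<phi> \<psi> A S = (\<Union>g\<in>carrier G. diag_act \<phi> \<psi> g ` (A \<times> S))"

text \<open>Properties of a deck-transformation action of Gamma = pi_1(M) on the universal
  cover M~ of a closed Riemannian manifold M (with the Riemannian distance):
  free, by isometries, properly discontinuous and cocompact; M~ is a proper,
  connected, simply connected metric space.\<close>
definition deck_action :: "('g, 'b) monoid_scheme \<Rightarrow> ('g \<Rightarrow> 'm::heine_borel \<Rightarrow> 'm) \<Rightarrow> bool" where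
  "deck_action G \<psi> \<longleftrightarrow>
     group_action G (UNIV::'m set) \<psi> \<and>
     connected (UNIV::'m set) \<and> simply_connected (UNIV::'m set) \<and>
     (\<forall>g\<in>carrier G. \<forall>a b. dist (\<psi> g a) (\<psi> g b) = dist a b) \<and>
     (\<forall>g\<in>carrier G. \<forall>m. \<psi> g m = m \<longrightarrow> g = \<one>\<^bsub>G\<^esub>) \<and>
     (\<forall>K. compact K \<longrightarrow> finite {g\<in>carrier G. \<psi> g ` K \<inter> K \<noteq> {}}) \<and>
     (\<exists>K. compact K \<and> (\<Union>g\<in>carrier G. \<psi> g ` K) = UNIV)"

end

theory Submission
  imports Defs
begin

lemma clopen_INT_top:
  assumes "finite I" "\<And>i. i \<in> I \<Longrightarrow> openin X (U i) \<and> closedin X (U i)"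
  shows "openin X (topspace X \<inter> (\<Inter>i\<in>I. U i)) \<and> closedin X (topspace X \<inter> (\<Inter>i\<in>I. U i))"
  using assms
proof (induction I rule: finite_induct)
  case empty
  then show ?case by simp
next
  case (insert a I)
  have e: "topspace X \<inter> (\<Inter>i\<in>insert a I. U i) = U a \<inter> (topspace X \<inter> (\<Inter>i\<in>I. U i))" by auto
  show ?case unfolding e using insert by auto
qed

theorem proposition4p1:
  fixes G :: "('g, 'b) monoid_scheme"
    and X :: "'x topology"
    and \<phi> :: "'g \<Rightarrow> 'x \<Rightarrow> 'x"
    and \<psi> :: "'g \<Rightarrow> 'm::heine_borel \<Rightarrow> 'm"
    and A :: "nat \<Rightarrow> 'x set" and S :: "nat \<Rightarrow> 'm set" and r :: nat
    and p :: 'm and R :: real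
  assumes "group G"
    and "cantor_set X"
    and "group_action G (topspace X) \<phi>"
    and "\<forall>g\<in>carrier G. continuous_map X X (\<phi> g)"
    and "\<forall>g\<in>carrier G. \<forall>x\<in>topspace X. \<phi> g x = x \<longrightarrow> g = \<one>\<^bsub>G\<^esub>"
    and "deck_action G \<psi>"
    and "\<forall>j<r. thick_set X (A j) (S j) \<and> non_self_intersecting G \<phi> \<psi> (A j) (S j)"
  shows "\<exists>k::nat. \<exists>P :: nat \<Rightarrow> 'x set.
           (\<forall>i<k. P i \<noteq> {} \<and> P i \<subseteq> topspace X \<and> closedin X (P i) \<and> openin X (P i)) \<and>
           (\<forall>i<k. \<forall>i'<k. i \<noteq> i' \<longrightarrow> P i \<inter> P i' = {}) \<and>
           (\<Union>i<k. P i) = topspace X \<and>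
           (\<forall>i<k. \<forall>x\<in>P i. \<forall>y\<in>P i. \<forall>q\<in>ball p R. \<forall>j<r.
              (x, q) \<in> thick_orbit G \<phi> \<psi> (A j) (S j) \<longleftrightarrow>
              (y, q) \<in> thick_orbit G \<phi> \<psi> (A j) (S j))"
proof -
  interpret ga: group_action G "topspace X" \<phi> by fact
  interpret grp: group G by fact
  define K where "K = closure (ball p R \<union> (\<Union>j<r. S j))"
  have bnd: "bounded (ball p R \<union> (\<Union>j<r. S j))"
    using assms(7) by (auto simp: thick_set_def)
  have cK: "compact K" unfolding K_def using bnd compact_closure by blast
  define F where "F = {g\<in>carrier G. \<psi> g ` K \<inter> K \<noteq> {}}"
  have finF: "finite F"
  proof -
    have "\<forall>K. compact K \<longrightarrow> finite {g\<in>carrier G. \<psi> g ` K \<inter> K \<noteq> {}}"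
      using assms(6) unfolding deck_action_def by (elim conjE)
    then show ?thesis using cK unfolding F_def by simp
  qed
  define D where "D = F \<times> {..<r}"
  have finD: "finite D" using finF by (simp add: D_def)
  define pre where "pre = (\<lambda>(g,j). {x\<in>topspace X. \<phi> (inv\<^bsub>G\<^esub> g) x \<in> A j})"
  have inv_app: "\<phi> (inv\<^bsub>G\<^esub> g) (\<phi> g a) = a" if "g \<in> carrier G" "a \<in> topspace X" for g a
  proof -
    have "\<phi> (inv\<^bsub>G\<^esub> g) (\<phi> g a) = \<phi> (inv\<^bsub>G\<^esub> g \<otimes>\<^bsub>G\<^esub> g) a"
      using ga.composition_rule[of a "inv\<^bsub>G\<^esub> g" g] that by simp
    also have "\<dots> = \<phi> \<one>\<^bsub>G\<^esub> a" using that by (simp add: grp.l_inv)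
    also have "\<dots> = a" using ga.id_eq_one[symmetric] that by simp
    finally show ?thesis .
  qed
  have app_inv: "\<phi> g (\<phi> (inv\<^bsub>G\<^esub> g) a) = a" if "g \<in> carrier G" "a \<in> topspace X" for g a
    using inv_app[of "inv\<^bsub>G\<^esub> g" a] that by simp
  have key: "(x, q) \<in> thick_orbit G \<phi> \<psi> (A j) (S j) \<longleftrightarrow>
      (\<exists>g\<in>F. \<phi> (inv\<^bsub>G\<^esub> g) x \<in> A j \<and> q \<in> \<psi> g ` S j)"
    if x: "x \<in> topspace X" and q: "q \<in> ball p R" and j: "j < r" for x q j
  proof
    assume "(x, q) \<in> thick_orbit G \<phi> \<psi> (A j) (S j)"
    then obtain g a s where g: "g \<in> carrier G" and a: "a \<in> A j" and s: "s \<in> S j"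
      and e: "x = \<phi> g a" "q = \<psi> g s"
      by (auto simp: thick_orbit_def diag_act_def)
    have aX: "a \<in> topspace X" using a assms(7) j by (auto simp: thick_set_def)
    have "q \<in> ball p R \<union> (\<Union>j<r. S j)" using q by (rule UnI1)
    then have "q \<in> K" unfolding K_def using closure_subset by (rule subsetD[rotated])
    have "s \<in> (\<Union>j<r. S j)" by (rule UN_I[of j]) (use j s in auto)
    then have "s \<in> ball p R \<union> (\<Union>j<r. S j)" by (rule UnI2)
    then have "s \<in> K" unfolding K_def using closure_subset by (rule subsetD[rotated])
    have "g \<in> F" using g e \<open>q \<in> K\<close> \<open>s \<in> K\<close> unfolding F_def by blast
    show "\<exists>g\<in>F. \<phi> (inv\<^bsub>G\<^esub> g) x \<in> A j \<and> q \<in> \<psi> g ` S j"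
    proof (rule bexI[of _ g])
      show "g \<in> F" by fact
      show "\<phi> (inv\<^bsub>G\<^esub> g) x \<in> A j \<and> q \<in> \<psi> g ` S j"
        using e inv_app[OF g aX] a s by simp
    qed
  next
    assume "\<exists>g\<in>F. \<phi> (inv\<^bsub>G\<^esub> g) x \<in> A j \<and> q \<in> \<psi> g ` S j"
    then obtain g s where g: "g \<in> F" and a: "\<phi> (inv\<^bsub>G\<^esub> g) x \<in> A j" and s: "s \<in> S j" "q = \<psi> g s"
      by auto
    have gc: "g \<in> carrier G" using g F_def by auto
    have "x = \<phi> g (\<phi> (inv\<^bsub>G\<^esub> g) x)" using app_inv[OF gc x] by simp
    then have "(x, q) = diag_act \<phi> \<psi> g (\<phi> (inv\<^bsub>G\<^esub> g) x, s)" using s by (simp add: diag_act_def)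
    then show "(x, q) \<in> thick_orbit G \<phi> \<psi> (A j) (S j)"
      unfolding thick_orbit_def using gc a s by blast
  qed
  define sig where "sig = (\<lambda>x. {d\<in>D. x \<in> pre d})"
  have same: "(x, q) \<in> thick_orbit G \<phi> \<psi> (A j) (S j) \<longleftrightarrow> (y, q) \<in> thick_orbit G \<phi> \<psi> (A j) (S j)"
    if "x \<in> topspace X" "y \<in> topspace X" "sig x = sig y" "q \<in> ball p R" "j < r" for x y q j
  proof -
    have "\<phi> (inv\<^bsub>G\<^esub> g) x \<in> A j \<longleftrightarrow> \<phi> (inv\<^bsub>G\<^esub> g) y \<in> A j" if "g \<in> F" for g
    proof -
      have "(g, j) \<in> sig x \<longleftrightarrow> (g, j) \<in> sig y" using \<open>sig x = sig y\<close> by simp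
      then show ?thesis using that \<open>j < r\<close> \<open>x \<in> topspace X\<close> \<open>y \<in> topspace X\<close>
        by (simp add: sig_def D_def pre_def)
    qed
    then show ?thesis using key[OF that(1,4,5)] key[OF that(2,4,5)] by auto
  qed
  define fib where "fib = (\<lambda>T. {x\<in>topspace X. sig x = T})"
  have clopen_pre: "openin X (pre d) \<and> closedin X (pre d)" if dD: "d \<in> D" for d
  proof -
    obtain g j where d: "d = (g, j)" "g \<in> F" "j < r" using dD D_def by auto
    have gc: "inv\<^bsub>G\<^esub> g \<in> carrier G" using d F_def by auto
    have c: "continuous_map X X (\<phi> (inv\<^bsub>G\<^esub> g))" using assms(4) gc by blast
    have "openin X (A j)" "closedin X (A j)" using assms(7) d by (auto simp: thick_set_def)
    then show ?thesis using d c openin_continuous_map_preimage closedin_continuous_map_preimage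
      by (auto simp: pre_def)
  qed
  have fib_eq: "fib T = topspace X \<inter> (\<Inter>d\<in>D. if d \<in> T then pre d else topspace X - pre d)"
    if "T \<subseteq> D" for T
    using that unfolding fib_def sig_def by (auto split: if_splits)
  have clopen_fib: "openin X (fib T) \<and> closedin X (fib T)" if "T \<subseteq> D" for T
    unfolding fib_eq[OF that]
    by (rule clopen_INT_top[OF finD]) (use clopen_pre in auto)
  define Q where "Q = fib ` Pow D - {{}}"
  have finQ: "finite Q" using finD by (simp add: Q_def)
  obtain h where h: "bij_betw h {0..<card Q} Q" using ex_bij_betw_nat_finite[OF finQ] by blast
  have hQ: "h i \<in> Q" if "i < card Q" for i using h that by (auto simp: bij_betw_def)
  have sigD: "sig x \<subseteq> D" for x by (auto simp: sig_def)
  show ?thesis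
  proof (intro exI conjI allI impI ballI)
    fix i assume i: "i < card Q"
    obtain T where T: "T \<subseteq> D" "h i = fib T" "fib T \<noteq> {}" using hQ[OF i] Q_def by auto
    show "h i \<noteq> {}" using T by simp
    show "h i \<subseteq> topspace X" using T fib_def by auto
    show "closedin X (h i)" "openin X (h i)" using T clopen_fib by auto
  next
    fix i i' assume i: "i < card Q" and i': "i' < card Q" and ne: "i \<noteq> i'"
    have "h i \<noteq> h i'" using h i i' ne by (auto simp: bij_betw_def inj_on_def)
    moreover obtain T where T: "h i = fib T" using hQ[OF i] Q_def by auto
    moreover obtain T' where T': "h i' = fib T'" using hQ[OF i'] Q_def by auto
    ultimately show "h i \<inter> h i' = {}" unfolding fib_def by auto
  next
    show "(\<Union>i<card Q. h i) = topspace X"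
    proof
      show "(\<Union>i<card Q. h i) \<subseteq> topspace X" using hQ Q_def fib_def by fastforce
      show "topspace X \<subseteq> (\<Union>i<card Q. h i)"
      proof
        fix x assume x: "x \<in> topspace X"
        have "fib (sig x) \<in> Q" using x sigD by (auto simp: Q_def fib_def)
        then obtain i where "i < card Q" "h i = fib (sig x)" using h
          by (metis atLeastLessThan_iff bij_betw_iff_bijections)
        then show "x \<in> (\<Union>i<card Q. h i)" using x by (auto simp: fib_def)
      qed
    qed
  next
    fix i x y q j assume i: "i < card Q" and x: "x \<in> h i" and y: "y \<in> h i"
      and q: "q \<in> ball p R" and j: "j < r"
    obtain T where T: "h i = fib T" using hQ[OF i] Q_def by auto
    show "(x, q) \<in> thick_orbit G \<phi> \<psi> (A j) (S j) \<longleftrightarrow> (y, q) \<in> thick_orbit G \<phi> \<psi> (A j) (S j)"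
      using same[OF _ _ _ q j] x y T by (auto simp: fib_def)
  qed
qed

end
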